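(* Suppose $n$ is even. Let $\ell$ be the smallest integer $\ge0$ such that $a_{\ell+1}\neq0$, and let $\lambda:=[\ell/2]$. Then the $n/2$ functions $J_1,\dots,J_\lambda,\ H,\ F_{\lambda+1},F_{\lambda+2},\dots,F_{n/2-1}$ are pairwise in involution with respect to $\{\cdot,\cdot\}$ and functionally independent (their differentials are linearly independent on a dense open subset of $\mathbb R^n$). Hence they define a Liouville integrable system on $(\mathbb R^n,\{\cdot,\cdot\})$.
   Context: Let $n\ge1$, $(a_1,\dots,a_n)\in\mathbb R^n\setminus\{0\}$. On $\mathbb R^n$ with coordinates $x_1,\dots,x_n$ consider the Poisson bracket $\{x_i,x_j\}=x_ix_j$ for $1\le i<j\le n$ (extended by skew-symmetry and the Leibniz rule; rational functions are considered on the open dense set where their denominators do not vanish); for $n$ even it has rank $n$. Let $H=a_1x_1+\dots+a_nx_n$, $v_0:=0$ and $v_i:=a_1x_1+\dots+a_ix_i$ for $i=1,\dots,n$. For $k=1,\dots,[n/2]$ let $J_k:=\dfrac{x_1x_3\cdots x_{2k-1}}{x_2x_4\cdots x_{2k}}$. For $n$ even and $k=1,\dots,n/2$ let $F_k:=v_{2k}\dfrac{x_{2k+2}x_{2k+4}\cdots x_n}{x_{2k+1}x_{2k+3}\cdots x_{n-1}}$ (empty product $=1$, so $F_{n/2}=H$). *)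

theory Defs
  imports "HOL-Analysis.Analysis"
begin

text \<open>Points of R^n are represented as functions x :: nat => real; the coordinates
  are x 1, ..., x n and all other values are 0 (set Rn n).  R^n carries the subspace
  topology of the product topology on nat => real, which is the Euclidean topology.\<close>

definition Rn :: "nat \<Rightarrow> (nat \<Rightarrow> real) set" where
  "Rn n = {x. \<forall>i. i \<notin> {1..n} \<longrightarrow> x i = 0}"

definition pd :: "((nat \<Rightarrow> real) \<Rightarrow> real) \<Rightarrow> nat \<Rightarrow> (nat \<Rightarrow> real) \<Rightarrow> real" where
  "pd f i x = deriv (\<lambda>t. f (x(i := t))) (x i)"

definition pi_mat :: "nat \<Rightarrow> nat \<Rightarrow> (nat \<Rightarrow> real) \<Rightarrow> real" where
  "pi_mat i j x = (if i < j then x i * x j else if j < i then - (x i * x j) else 0)"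

definition pbracket :: "nat \<Rightarrow> ((nat \<Rightarrow> real) \<Rightarrow> real) \<Rightarrow> ((nat \<Rightarrow> real) \<Rightarrow> real)
    \<Rightarrow> (nat \<Rightarrow> real) \<Rightarrow> real" where
  "pbracket n f g x = (\<Sum>i\<in>{1..n}. \<Sum>j\<in>{1..n}. pi_mat i j x * pd f i x * pd g j x)"

definition vv :: "(nat \<Rightarrow> real) \<Rightarrow> nat \<Rightarrow> (nat \<Rightarrow> real) \<Rightarrow> real" where
  "vv a i x = (\<Sum>j\<in>{1..i}. a j * x j)"

definition HH :: "(nat \<Rightarrow> real) \<Rightarrow> nat \<Rightarrow> (nat \<Rightarrow> real) \<Rightarrow> real" where
  "HH a n x = vv a n x"

definition JJ :: "nat \<Rightarrow> (nat \<Rightarrow> real) \<Rightarrow> real" where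
  "JJ k x = (\<Prod>j\<in>{1..k}. x (2*j - 1)) / (\<Prod>j\<in>{1..k}. x (2*j))"

definition FF :: "(nat \<Rightarrow> real) \<Rightarrow> nat \<Rightarrow> nat \<Rightarrow> (nat \<Rightarrow> real) \<Rightarrow> real" where
  "FF a n k x = vv a (2*k) x * (\<Prod>j\<in>{k+1..n div 2}. x (2*j)) / (\<Prod>j\<in>{k+1..n div 2}. x (2*j - 1))"

definition ell :: "(nat \<Rightarrow> real) \<Rightarrow> nat" where
  "ell a = (LEAST l. a (l + 1) \<noteq> 0)"

definition fam :: "(nat \<Rightarrow> real) \<Rightarrow> nat \<Rightarrow> nat \<Rightarrow> (nat \<Rightarrow> real) \<Rightarrow> real" where
  "fam a n k = (let lam = ell a div 2 in
     if k \<le> lam then JJ k else if k = lam + 1 then HH a n else FF a n (k - 1))"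

end

theory Submission
  imports Defs
begin


definition sg :: "nat \<Rightarrow> nat \<Rightarrow> real" where
  "sg i j = (if i < j then 1 else if j < i then -1 else 0)"

definition Bf :: "nat \<Rightarrow> (nat \<Rightarrow> real) \<Rightarrow> (nat \<Rightarrow> real) \<Rightarrow> real" where
  "Bf n w u = (\<Sum>i\<in>{1..n}. \<Sum>j\<in>{1..n}. sg i j * w i * u j)"

lemma sg_swap: "sg j i = - sg i j"
  by (simp add: sg_def)

lemma Bf_antisym: "Bf n w u = - Bf n u w"
proof -
  have "Bf n u w = (\<Sum>j\<in>{1..n}. \<Sum>i\<in>{1..n}. sg j i * u j * w i)"
    unfolding Bf_def by simp
  also have "\<dots> = (\<Sum>i\<in>{1..n}. \<Sum>j\<in>{1..n}. sg j i * u j * w i)"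
    by (rule sum.swap)
  also have "\<dots> = - Bf n w u"
  proof -
    have "\<And>i j. sg j i * u j * w i = - (sg i j * w i * u j)"
      by (simp add: sg_def)
    then show ?thesis unfolding Bf_def by (simp add: sum_negf)
  qed
  finally show ?thesis by simp
qed

lemma Bf_self: "Bf n w w = 0"
  using Bf_antisym[of n w w] by simp

lemma Bf_cong: "(\<And>i. i \<in> {1..n} \<Longrightarrow> w i = w' i) \<Longrightarrow> (\<And>i. i \<in> {1..n} \<Longrightarrow> u i = u' i)
   \<Longrightarrow> Bf n w u = Bf n w' u'"
  unfolding Bf_def by (intro sum.cong refl) auto

lemma Bf_lin1: "Bf n (\<lambda>i. c * w i + d * w' i) u = c * Bf n w u + d * Bf n w' u"
  unfolding Bf_def by (simp add: algebra_simps sum.distrib sum_distrib_left)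

lemma Bf_lin2: "Bf n u (\<lambda>i. c * w i + d * w' i) = c * Bf n u w + d * Bf n u w'"
proof -
  have "Bf n u (\<lambda>i. c * w i + d * w' i) = - Bf n (\<lambda>i. c * w i + d * w' i) u"
    by (rule Bf_antisym)
  also have "\<dots> = - (c * Bf n w u + d * Bf n w' u)" by (simp add: Bf_lin1)
  also have "\<dots> = c * Bf n u w + d * Bf n u w'"
    using Bf_antisym[of n w u] Bf_antisym[of n w' u] by simp
  finally show ?thesis .
qed

lemma Bf_add1: "Bf n (\<lambda>i. w i + w' i) u = Bf n w u + Bf n w' u"
  using Bf_lin1[of n 1 w 1 w' u] by simp

lemma Bf_add2: "Bf n u (\<lambda>i. w i + w' i) = Bf n u w + Bf n u w'"
  using Bf_lin2[of n u 1 w 1 w'] by simp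

lemma Bf_sep:
  assumes "\<And>i j. i \<in> {1..n} \<Longrightarrow> j \<in> {1..n} \<Longrightarrow> w i \<noteq> 0 \<Longrightarrow> u j \<noteq> 0 \<Longrightarrow> i < j"
  shows "Bf n w u = (\<Sum>i\<in>{1..n}. w i) * (\<Sum>j\<in>{1..n}. u j)"
  unfolding Bf_def sum_product
  apply (intro sum.cong refl)
  subgoal for i j using assms[of i j] by (cases "w i = 0 \<or> u j = 0") (auto simp: sg_def)
  done

lemma Bf_cc: "Bf n w u = (\<Sum>i\<in>{1..n}. w i * (\<Sum>j\<in>{1..n}. sg i j * u j))"
  unfolding Bf_def by (simp add: sum_distrib_left mult_ac)

lemma alt_sum: "a \<le> b \<Longrightarrow> (\<Sum>j\<in>{a..<b}. (-1::real)^j) = (if even (b - a) then 0 else (-1)^a)"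
proof (induction b)
  case 0 then show ?case by simp
next
  case (Suc b)
  show ?case
  proof (cases "a = Suc b")
    case True then show ?thesis by simp
  next
    case False
    then have "a \<le> b" using Suc by simp
    have e: "(-1::real)^b = (-1)^a * (-1)^(b-a)"
      using \<open>a \<le> b\<close> by (metis le_add_diff_inverse power_add)
    have "(\<Sum>j\<in>{a..<Suc b}. (-1::real)^j) = (\<Sum>j\<in>{a..<b}. (-1::real)^j) + (-1)^b"
      using \<open>a \<le> b\<close> by simp
    then have s: "(\<Sum>j\<in>{a..<Suc b}. (-1::real)^j) = (\<Sum>j\<in>{a..<b}. (-1::real)^j) + (-1)^a * (-1)^(b-a)"
      using e by simp
    have sb: "Suc b - a = Suc (b - a)" using \<open>a \<le> b\<close> by (rule Suc_diff_le)
    show ?thesis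
    proof (cases "even (b - a)")
      case True
      then have p: "(-1::real)^(b-a) = 1" by simp
      show ?thesis unfolding s Suc.IH[OF \<open>a \<le> b\<close>] sb p using True by simp
    next
      case False
      then have p: "(-1::real)^(b-a) = -1" by simp
      show ?thesis unfolding s Suc.IH[OF \<open>a \<le> b\<close>] sb p using False by simp
    qed

  qed
qed




lemma upd_eq: "(x(i:=t)) j = x j + (if j = i then t - x i else (0::real))"
  by simp

lemma vv_upd: "vv a p (x(i:=t)) = vv a p x + (if i \<in> {1..p} then a i * (t - x i) else 0)"
proof -
  have "vv a p (x(i:=t)) = (\<Sum>j\<in>{1..p}. a j * x j + (if j = i then a i * (t - x i) else 0))"
    unfolding vv_def by (intro sum.cong refl) (auto simp: algebra_simps)
  also have "\<dots> = vv a p x + (\<Sum>j\<in>{1..p}. (if j = i then a i * (t - x i) else 0))"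
    unfolding vv_def by (simp add: sum.distrib)
  also have "(\<Sum>j\<in>{1..p}. (if j = i then a i * (t - x i) else 0)) = (if i \<in> {1..p} then a i * (t - x i) else 0)"
    by (rule sum.delta[OF finite_atLeastAtMost])
  finally show ?thesis .
qed

lemma prod_upd:
  fixes x :: "nat \<Rightarrow> real"
  assumes "finite S" "inj_on g S" "x i \<noteq> 0"
  shows "(\<Prod>j\<in>S. (x(i:=t)) (g j)) = (if i \<in> g`S then t / x i else 1) * (\<Prod>j\<in>S. x (g j))"
proof (cases "i \<in> g`S")
  case False
  then have "(\<Prod>j\<in>S. (x(i:=t)) (g j)) = (\<Prod>j\<in>S. x (g j))"
    by (intro prod.cong refl) auto
  then show ?thesis using False by simp
next
  case True
  then obtain j0 where j0: "j0 \<in> S" "g j0 = i" by auto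
  have r: "(\<Prod>j\<in>S-{j0}. (x(i:=t)) (g j)) = (\<Prod>j\<in>S-{j0}. x (g j))"
  proof (intro prod.cong refl)
    fix j assume "j \<in> S - {j0}"
    then have "g j \<noteq> i" using j0 assms(2) by (metis DiffE inj_on_def singletonI)
    then show "(x(i:=t)) (g j) = x (g j)" by simp
  qed
  have "(\<Prod>j\<in>S. (x(i:=t)) (g j)) = (x(i:=t)) (g j0) * (\<Prod>j\<in>S-{j0}. (x(i:=t)) (g j))"
    by (rule prod.remove[OF assms(1) j0(1)])
  also have "\<dots> = t * (\<Prod>j\<in>S-{j0}. x (g j))" using r j0 by simp
  also have "\<dots> = t / x i * (x (g j0) * (\<Prod>j\<in>S-{j0}. x (g j)))" using j0 assms(3) by (simp add: field_simps)
  also have "\<dots> = t / x i * (\<Prod>j\<in>S. x (g j))"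
    using prod.remove[OF assms(1) j0(1), of "\<lambda>j. x (g j)"] by simp
  finally show ?thesis using True by simp
qed

lemma pd_lin: assumes "\<And>t. f (x(i:=t)) = A + C * t" shows "pd f i x = C"
proof -
  have e: "(\<lambda>t. f (x(i:=t))) = (\<lambda>t. A + C * t)" using assms by auto
  have "((\<lambda>t. A + C * t) has_real_derivative C) (at (x i))"
    by (auto intro!: derivative_eq_intros)
  then show ?thesis unfolding pd_def e by (rule DERIV_imp_deriv)
qed

lemma pd_inv: assumes "\<And>t. f (x(i:=t)) = C / t" "x i \<noteq> 0" shows "pd f i x = - C / (x i)^2"
proof -
  have e: "(\<lambda>t. f (x(i:=t))) = (\<lambda>t. C / t)" using assms by auto
  have "((\<lambda>t. C / t) has_real_derivative - C / (x i)^2) (at (x i))"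
    using assms(2) by (auto intro!: derivative_eq_intros simp: power2_eq_square)
  then show ?thesis unfolding pd_def e by (rule DERIV_imp_deriv)
qed

lemma img_even: "(i::nat) \<in> (\<lambda>j. 2*j) ` {p..q} \<longleftrightarrow> even i \<and> 2*p \<le> i \<and> i \<le> 2*q"
  by (auto elim!: evenE)

lemma img_odd: "1 \<le> p \<Longrightarrow> (i::nat) \<in> (\<lambda>j. 2*j - 1) ` {p..q} \<longleftrightarrow> odd i \<and> 2*p \<le> i + 1 \<and> i + 1 \<le> 2*q"
  apply (rule iffI)
   apply auto[1]
  apply (rule image_eqI[where x = "(i+1) div 2"])
  by (auto elim!: oddE)

lemma inj_even: "inj_on (\<lambda>j::nat. 2*j) S" by (auto simp: inj_on_def)
lemma inj_odd: "1 \<le> p \<Longrightarrow> inj_on (\<lambda>j::nat. 2*j - 1) {p..q}" by (auto simp: inj_on_def)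




definition MMx :: "nat \<Rightarrow> nat \<Rightarrow> (nat \<Rightarrow> real) \<Rightarrow> real" where
  "MMx n m x = (\<Prod>j\<in>{m+1..n div 2}. x (2*j)) / (\<Prod>j\<in>{m+1..n div 2}. x (2*j - 1))"

lemma FF_MM: "FF a n m x = vv a (2*m) x * MMx n m x"
  unfolding FF_def MMx_def by simp

lemma EJ:
  fixes x :: "nat \<Rightarrow> real"
  assumes xi: "x i \<noteq> 0" and i1: "1 \<le> i"
  shows "x i * pd (JJ k) i x = (if i \<le> 2*k then (-1)^(i+1) * JJ k x else 0)"
proof -
  define Po where "Po = (\<Prod>j\<in>{1..k}. x (2*j-1))"
  define Pe where "Pe = (\<Prod>j\<in>{1..k}. x (2*j))"
  have co: "i \<in> (\<lambda>j. 2*j - 1) ` {1..k} \<longleftrightarrow> odd i \<and> i \<le> 2*k"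
  proof -
    have "odd i \<and> 2*1 \<le> i+1 \<and> i+1 \<le> 2*k \<longleftrightarrow> odd i \<and> i \<le> 2*k" using i1 by presburger
    then show ?thesis using img_odd[of 1 i k] by simp
  qed
  have ce: "i \<in> (\<lambda>j. 2*j) ` {1..k} \<longleftrightarrow> even i \<and> i \<le> 2*k"
    using img_even[of i 1 k] i1 by (auto elim!: evenE)
  have po: "\<And>t. (\<Prod>j\<in>{1..k}. (x(i:=t)) (2*j-1)) = (if odd i \<and> i \<le> 2*k then t / x i else 1) * Po"
    using prod_upd[of "{1..k}" "\<lambda>j. 2*j-1" x i] inj_odd[of 1 k] xi co unfolding Po_def by simp
  have pe: "\<And>t. (\<Prod>j\<in>{1..k}. (x(i:=t)) (2*j)) = (if even i \<and> i \<le> 2*k then t / x i else 1) * Pe"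
    using prod_upd[of "{1..k}" "\<lambda>j. 2*j" x i] inj_even[of "{1..k}"] xi ce unfolding Pe_def by simp
  have J: "\<And>t. JJ k (x(i:=t)) = (if odd i \<and> i \<le> 2*k then t / x i else 1) * Po /
             ((if even i \<and> i \<le> 2*k then t / x i else 1) * Pe)"
    unfolding JJ_def po pe by simp
  have Jx: "JJ k x = Po / Pe" unfolding JJ_def Po_def Pe_def by simp
  show ?thesis
  proof (cases "i \<le> 2*k")
    case True
    show ?thesis
    proof (cases "odd i")
      case True
      have "pd (JJ k) i x = Po / (x i * Pe)"
        by (rule pd_lin[where A = 0]) (use True \<open>i \<le> 2*k\<close> in \<open>simp add: J\<close>)
      then show ?thesis using True \<open>i \<le> 2*k\<close> xi Jx by simp
    next
      case False
      have "\<And>t. JJ k (x(i:=t)) = (Po * x i / Pe) / t"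
      proof -
        fix t
        show "JJ k (x(i:=t)) = (Po * x i / Pe) / t"
          unfolding J using False \<open>i \<le> 2*k\<close> xi
          by (cases "t = 0"; cases "Pe = 0") (simp_all add: field_simps)
      qed
      then have "pd (JJ k) i x = - (Po * x i / Pe) / (x i)^2"
        using xi by (rule pd_inv)
      then show ?thesis using False \<open>i \<le> 2*k\<close> xi Jx by (simp add: power2_eq_square)
    qed
  next
    case False
    have "pd (JJ k) i x = 0"
      by (rule pd_lin[where A = "JJ k x"]) (use False in \<open>simp add: J Jx\<close>)
    then show ?thesis using False by simp
  qed
qed

lemma EF:
  fixes x :: "nat \<Rightarrow> real"
  assumes xi: "x i \<noteq> 0" and i1: "1 \<le> i" and iN: "i \<le> n" and ev: "even n"
  shows "x i * pd (FF a n m) i x = (if i \<le> 2*m then a i * x i * MMx n m x else (-1)^i * FF a n m x)"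
proof -
  define N where "N = n div 2"
  have nN: "n = 2*N" using ev unfolding N_def by simp
  define Po where "Po = (\<Prod>j\<in>{m+1..N}. x (2*j-1))"
  define Pe where "Pe = (\<Prod>j\<in>{m+1..N}. x (2*j))"
  have co: "i \<in> (\<lambda>j. 2*j - 1) ` {m+1..N} \<longleftrightarrow> odd i \<and> 2*m < i"
  proof -
    have "odd i \<and> 2*(m+1) \<le> i+1 \<and> i+1 \<le> 2*N \<longleftrightarrow> odd i \<and> 2*m < i" using iN nN by presburger
    then show ?thesis using img_odd[of "m+1" i N] by simp
  qed
  have ce: "i \<in> (\<lambda>j. 2*j) ` {m+1..N} \<longleftrightarrow> even i \<and> 2*m < i"
  proof -
    have "even i \<and> 2*(m+1) \<le> i \<and> i \<le> 2*N \<longleftrightarrow> even i \<and> 2*m < i" using iN nN by presburger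
    then show ?thesis using img_even[of i "m+1" N] by simp
  qed
  have po: "\<And>t. (\<Prod>j\<in>{m+1..N}. (x(i:=t)) (2*j-1)) = (if odd i \<and> 2*m < i then t / x i else 1) * Po"
    using prod_upd[of "{m+1..N}" "\<lambda>j. 2*j-1" x i] inj_odd[of "m+1" N] xi co unfolding Po_def by simp
  have pe: "\<And>t. (\<Prod>j\<in>{m+1..N}. (x(i:=t)) (2*j)) = (if even i \<and> 2*m < i then t / x i else 1) * Pe"
    using prod_upd[of "{m+1..N}" "\<lambda>j. 2*j" x i] inj_even[of "{m+1..N}"] xi ce unfolding Pe_def by simp
  have vu: "\<And>t. vv a (2*m) (x(i:=t)) = vv a (2*m) x + (if i \<le> 2*m then a i * (t - x i) else 0)"
    using vv_upd[of a "2*m" x i] i1 by simp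
  have F: "\<And>t. FF a n m (x(i:=t)) = (vv a (2*m) x + (if i \<le> 2*m then a i * (t - x i) else 0)) *
       ((if even i \<and> 2*m < i then t / x i else 1) * Pe) / ((if odd i \<and> 2*m < i then t / x i else 1) * Po)"
    unfolding FF_def vu N_def[symmetric] pe po by simp
  have Fx: "FF a n m x = vv a (2*m) x * Pe / Po" unfolding FF_def Po_def Pe_def N_def by simp
  have Mx: "MMx n m x = Pe / Po" unfolding MMx_def Po_def Pe_def N_def by simp
  show ?thesis
  proof (cases "i \<le> 2*m")
    case True
    have "pd (FF a n m) i x = a i * Pe / Po"
    proof (rule pd_lin[where A = "(vv a (2*m) x - a i * x i) * Pe / Po"])
      fix t
      show "FF a n m (x(i:=t)) = (vv a (2*m) x - a i * x i) * Pe / Po + a i * Pe / Po * t"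
        unfolding F using True by (simp add: algebra_simps add_divide_distrib[symmetric])
    qed
    then show ?thesis using True Mx by simp
  next
    case False
    show ?thesis
    proof (cases "even i")
      case True
      have "pd (FF a n m) i x = vv a (2*m) x * Pe / (x i * Po)"
      proof (rule pd_lin[where A = 0])
        fix t
        show "FF a n m (x(i:=t)) = 0 + vv a (2*m) x * Pe / (x i * Po) * t"
          unfolding F using True False xi by simp
      qed
      then show ?thesis using True False xi Fx by simp
    next
      case odd: False
      have "pd (FF a n m) i x = - (vv a (2*m) x * Pe * x i / Po) / (x i)^2"
      proof (rule pd_inv)
        fix t
        show "FF a n m (x(i:=t)) = (vv a (2*m) x * Pe * x i / Po) / t"
          unfolding F using odd False xi
          by (cases "t = 0"; cases "Po = 0") (simp_all add: field_simps)
      qed (use xi in simp)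
      then show ?thesis using odd False xi Fx by (simp add: power2_eq_square)
    qed
  qed
qed




definition Lv :: "(nat \<Rightarrow> real) \<Rightarrow> (nat \<Rightarrow> real) \<Rightarrow> nat \<Rightarrow> nat \<Rightarrow> real" where
  "Lv a x p i = (if i \<le> p then a i * x i else 0)"
definition bt :: "nat \<Rightarrow> nat \<Rightarrow> real" where
  "bt m i = (if i \<le> 2*m then 0 else (-1)^i)"
definition al :: "nat \<Rightarrow> nat \<Rightarrow> real" where
  "al k i = (if i \<le> 2*k then (-1)^(i+1) else 0)"

lemma Bf_scal1: "Bf n (\<lambda>i. c * w i) u = c * Bf n w u"
  using Bf_lin1[of n c w 0 w u] by simp
lemma Bf_scal2: "Bf n u (\<lambda>i. c * w i) = c * Bf n u w"
  using Bf_lin2[of n u c w 0 w] by simp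

lemma sum_split: "(p::nat) \<le> n \<Longrightarrow> (\<Sum>i\<in>{1..n}. f i) = (\<Sum>i\<in>{1..p}. f i) + (\<Sum>i\<in>{p+1..n}. f i)"
proof -
  assume "p \<le> n"
  then have "{1..n} = {1..p} \<union> {p+1..n}" by auto
  then show ?thesis by (simp add: sum.union_disjoint)
qed

lemma sum_Lv: assumes "p \<le> n" shows "(\<Sum>i\<in>{1..n}. Lv a x p i) = vv a p x"
proof -
  have "(\<Sum>i\<in>{1..n}. Lv a x p i) = (\<Sum>i\<in>{1..p}. Lv a x p i) + (\<Sum>i\<in>{p+1..n}. Lv a x p i)"
    using assms by (rule sum_split)
  also have "(\<Sum>i\<in>{p+1..n}. Lv a x p i) = 0" by (simp add: Lv_def)
  also have "(\<Sum>i\<in>{1..p}. Lv a x p i) = vv a p x" unfolding vv_def Lv_def by simp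
  finally show ?thesis by simp
qed

lemma sum_bt: assumes "2*m \<le> n" "even n" shows "(\<Sum>i\<in>{1..n}. bt m i) = 0"
proof -
  have "(\<Sum>i\<in>{1..n}. bt m i) = (\<Sum>i\<in>{1..2*m}. bt m i) + (\<Sum>i\<in>{2*m+1..n}. bt m i)"
    using assms(1) by (rule sum_split)
  also have "(\<Sum>i\<in>{1..2*m}. bt m i) = 0" by (simp add: bt_def)
  also have "(\<Sum>i\<in>{2*m+1..n}. bt m i) = (\<Sum>i\<in>{2*m+1..<n+1}. (-1)^i)"
    by (intro sum.cong) (auto simp: bt_def)
  also have "\<dots> = 0" using assms by (subst alt_sum) auto
  finally show ?thesis by simp
qed

lemma sum_al: assumes "2*k \<le> n" shows "(\<Sum>i\<in>{1..n}. al k i) = 0"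
proof -
  have "(\<Sum>i\<in>{1..n}. al k i) = (\<Sum>i\<in>{1..2*k}. al k i) + (\<Sum>i\<in>{2*k+1..n}. al k i)"
    using assms by (rule sum_split)
  also have "(\<Sum>i\<in>{2*k+1..n}. al k i) = 0" by (simp add: al_def)
  also have "(\<Sum>i\<in>{1..2*k}. al k i) = - (\<Sum>i\<in>{1..<2*k+1}. (-1)^i)"
    by (simp add: al_def sum_negf[symmetric] atLeastLessThanSuc_atLeastAtMost)
  also have "(\<Sum>i\<in>{1..<2*k+1}. (-1::real)^i) = 0" by (subst alt_sum) auto
  finally show ?thesis by simp
qed

lemma cc_bt: assumes "2*m < i" "i \<le> n" "even n"
  shows "(\<Sum>j\<in>{1..n}. sg i j * bt m j) = 1"
proof -
  let ?f = "\<lambda>j. sg i j * bt m j"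
  have "(\<Sum>j\<in>{1..n}. ?f j) = (\<Sum>j\<in>{1..2*m}. ?f j) + (\<Sum>j\<in>{2*m+1..n}. ?f j)"
    using assms by (intro sum_split) auto
  also have "(\<Sum>j\<in>{1..2*m}. ?f j) = 0" by (simp add: bt_def)
  also have "(\<Sum>j\<in>{2*m+1..n}. ?f j) = (\<Sum>j\<in>{2*m+1..<i}. ?f j) + ?f i + (\<Sum>j\<in>{i+1..<n+1}. ?f j)"
  proof -
    have "{2*m+1..n} = {2*m+1..<i} \<union> {i} \<union> {i+1..<n+1}" using assms by auto
    then show ?thesis by (simp add: sum.union_disjoint)
  qed
  also have "(\<Sum>j\<in>{2*m+1..<i}. ?f j) = - (\<Sum>j\<in>{2*m+1..<i}. (-1)^j)"
    by (simp add: sum_negf[symmetric] sg_def bt_def)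
  also have "?f i = 0" by (simp add: sg_def)
  also have "(\<Sum>j\<in>{i+1..<n+1}. ?f j) = (\<Sum>j\<in>{i+1..<n+1}. (-1)^j)"
    using assms by (intro sum.cong) (auto simp: sg_def bt_def)
  also have "(\<Sum>j\<in>{2*m+1..<i}. (-1::real)^j) = (if even i then -1 else 0)"
    using assms by (subst alt_sum) auto
  also have "(\<Sum>j\<in>{i+1..<n+1}. (-1::real)^j) = (if even i then 0 else 1)"
    using assms by (subst alt_sum) auto
  finally show ?thesis by simp
qed




lemma B_FF:
  fixes x :: "nat \<Rightarrow> real"
  assumes ev: "even n" and mp: "m \<le> p" and pn: "2*p \<le> n"
  shows "Bf n (\<lambda>i. MMx n m x * Lv a x (2*m) i + FF a n m x * bt m i)
              (\<lambda>i. MMx n p x * Lv a x (2*p) i + FF a n p x * bt p i) = 0"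
proof -
  define L where "L = Lv a x (2*m)"
  define L' where "L' = Lv a x (2*p)"
  define D where "D = (\<lambda>i. L' i - L i)"
  define v where "v = vv a (2*m) x"
  define v' where "v' = vv a (2*p) x"
  have L'eq: "L' = (\<lambda>i. L i + D i)" unfolding D_def by simp
  have sD: "(\<Sum>i\<in>{1..n}. D i) = v' - v"
    unfolding D_def L_def L'_def v_def v'_def
    using sum_Lv[of "2*p" n a x] sum_Lv[of "2*m" n a x] mp pn
    by (simp add: sum_subtractf)
  have sL: "(\<Sum>i\<in>{1..n}. L i) = v" unfolding L_def v_def using sum_Lv[of "2*m" n a x] mp pn by simp
  have Dsupp: "\<And>i. D i \<noteq> 0 \<Longrightarrow> 2*m < i" unfolding D_def L_def L'_def Lv_def using mp
    by (auto split: if_splits)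
  have Lsupp: "\<And>i. L i \<noteq> 0 \<Longrightarrow> i \<le> 2*m" unfolding L_def Lv_def by (auto split: if_splits)
  have btsupp: "\<And>q i. bt q i \<noteq> 0 \<Longrightarrow> 2*q < i" unfolding bt_def by (auto split: if_splits)
  have sbt: "\<And>q. 2*q \<le> n \<Longrightarrow> (\<Sum>i\<in>{1..n}. bt q i) = 0" using ev sum_bt by blast
  have a: "Bf n L L' = v * (v' - v)"
  proof -
    have "Bf n L L' = Bf n L L + Bf n L D" unfolding L'eq by (rule Bf_add2)
    also have "Bf n L D = (\<Sum>i\<in>{1..n}. L i) * (\<Sum>i\<in>{1..n}. D i)"
      by (rule Bf_sep) (use Lsupp Dsupp in fastforce)
    finally show ?thesis using sD sL Bf_self by simp
  qed
  have b: "Bf n L (bt p) = 0"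
  proof -
    have "Bf n L (bt p) = (\<Sum>i\<in>{1..n}. L i) * (\<Sum>i\<in>{1..n}. bt p i)"
      by (rule Bf_sep) (use Lsupp btsupp mp in fastforce)
    then show ?thesis using sbt pn by simp
  qed
  have c: "Bf n (bt m) L' = - (v' - v)"
  proof -
    have "Bf n (bt m) L' = Bf n (bt m) L + Bf n (bt m) D" unfolding L'eq by (rule Bf_add2)
    also have "Bf n (bt m) L = - ((\<Sum>i\<in>{1..n}. L i) * (\<Sum>i\<in>{1..n}. bt m i))"
      by (subst Bf_antisym, subst Bf_sep) (use Lsupp btsupp in fastforce, simp)
    also have "Bf n (bt m) D = - (\<Sum>i\<in>{1..n}. D i * (\<Sum>j\<in>{1..n}. sg i j * bt m j))"
      by (subst Bf_antisym, subst Bf_cc) simp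
    also have "(\<Sum>i\<in>{1..n}. D i * (\<Sum>j\<in>{1..n}. sg i j * bt m j)) = (\<Sum>i\<in>{1..n}. D i)"
    proof (intro sum.cong refl)
      fix i assume i: "i \<in> {1..n}"
      show "D i * (\<Sum>j\<in>{1..n}. sg i j * bt m j) = D i"
      proof (cases "D i = 0")
        case False
        then show ?thesis using Dsupp[OF False] i cc_bt[of m i n] ev by simp
      qed simp
    qed
    finally show ?thesis using sD sbt[of m] mp pn by simp
  qed
  have d: "Bf n (bt m) (bt p) = 0"
  proof -
    define E where "E = (\<lambda>i. bt m i - bt p i)"
    have "bt m = (\<lambda>i. E i + bt p i)" unfolding E_def by simp
    then have "Bf n (bt m) (bt p) = Bf n E (bt p) + Bf n (bt p) (bt p)"
      by (simp add: Bf_add1)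
    also have "Bf n E (bt p) = (\<Sum>i\<in>{1..n}. E i) * (\<Sum>i\<in>{1..n}. bt p i)"
    proof (rule Bf_sep)
      fix i j assume "E i \<noteq> 0" "bt p j \<noteq> 0"
      then have "i \<le> 2*p" "2*p < j" using btsupp unfolding E_def bt_def using mp
        by (auto split: if_splits)
      then show "i < j" by simp
    qed
    finally show ?thesis using sbt pn Bf_self by simp
  qed
  show ?thesis
    unfolding L_def[symmetric] L'_def[symmetric]
    unfolding Bf_lin1 Bf_lin2 a b c d
    unfolding FF_MM v_def[symmetric] v'_def[symmetric]
    by (simp add: algebra_simps)
qed

lemma alsupp: "al k i \<noteq> 0 \<Longrightarrow> i \<le> 2*k" unfolding al_def by (auto split: if_splits)

lemma B_JF:
  fixes x :: "nat \<Rightarrow> real"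
  assumes ev: "even n" and kp: "k \<le> p" and pn: "2*p \<le> n" and a0: "\<And>i. 1 \<le> i \<Longrightarrow> i \<le> 2*k \<Longrightarrow> a i = 0"
  shows "Bf n (\<lambda>i. JJ k x * al k i)
              (\<lambda>i. MMx n p x * Lv a x (2*p) i + FF a n p x * bt p i) = 0"
proof -
  have sal: "(\<Sum>i\<in>{1..n}. al k i) = 0" using sum_al[of k n] kp pn by simp
  have 1: "Bf n (al k) (Lv a x (2*p)) = 0"
  proof -
    have "Bf n (al k) (Lv a x (2*p)) = (\<Sum>i\<in>{1..n}. al k i) * (\<Sum>i\<in>{1..n}. Lv a x (2*p) i)"
    proof (rule Bf_sep)
      fix i j assume "i \<in> {1..n}" "j \<in> {1..n}" "al k i \<noteq> 0" "Lv a x (2*p) j \<noteq> 0"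
      then have "i \<le> 2*k" "a j \<noteq> 0" "1 \<le> j" using alsupp unfolding Lv_def by (auto split: if_splits)
      then show "i < j" using a0[of j] by force
    qed
    then show ?thesis using sal by simp
  qed
  have 2: "Bf n (al k) (bt p) = 0"
  proof -
    have "Bf n (al k) (bt p) = (\<Sum>i\<in>{1..n}. al k i) * (\<Sum>i\<in>{1..n}. bt p i)"
    proof (rule Bf_sep)
      fix i j assume "al k i \<noteq> 0" "bt p j \<noteq> 0"
      then have "i \<le> 2*k" "2*p < j" using alsupp unfolding bt_def by (auto split: if_splits)
      then show "i < j" using kp by simp
    qed
    then show ?thesis using sal by simp
  qed
  show ?thesis unfolding Bf_scal1 Bf_lin2 1 2 by simp
qed

lemma B_JJ:
  fixes x :: "nat \<Rightarrow> real"
  assumes km: "k \<le> m" and mn: "2*m \<le> n"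
  shows "Bf n (\<lambda>i. JJ k x * al k i) (\<lambda>i. JJ m x * al m i) = 0"
proof -
  define D where "D = (\<lambda>i. al m i - al k i)"
  have e: "al m = (\<lambda>i. al k i + D i)" unfolding D_def by simp
  have sal: "(\<Sum>i\<in>{1..n}. al k i) = 0" using sum_al[of k n] km mn by simp
  have "Bf n (al k) (al m) = Bf n (al k) (al k) + Bf n (al k) D" unfolding e by (rule Bf_add2)
  also have "Bf n (al k) D = (\<Sum>i\<in>{1..n}. al k i) * (\<Sum>i\<in>{1..n}. D i)"
  proof (rule Bf_sep)
    fix i j assume "al k i \<noteq> 0" "D j \<noteq> 0"
    then have "i \<le> 2*k" "2*k < j" using alsupp km unfolding D_def al_def by (auto split: if_splits)
    then show "i < j" by simp
  qed
  finally have "Bf n (al k) (al m) = 0" using sal Bf_self by simp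
  then show ?thesis unfolding Bf_scal1 Bf_scal2 by simp
qed




lemma ell_facts:
  assumes "\<exists>i\<in>{1..n}. a i \<noteq> 0"
  shows "a (ell a + 1) \<noteq> 0" "ell a + 1 \<le> n" "\<And>i. 1 \<le> i \<Longrightarrow> i \<le> ell a \<Longrightarrow> a i = 0"
proof -
  obtain i where i: "i \<in> {1..n}" "a i \<noteq> 0" using assms by auto
  then have ai: "a ((i - 1) + 1) \<noteq> 0" by simp
  show "a (ell a + 1) \<noteq> 0" unfolding ell_def by (rule LeastI[of _ "i - 1"]) (rule ai)
  have "ell a \<le> i - 1" unfolding ell_def by (rule Least_le) (rule ai)
  then show "ell a + 1 \<le> n" using i by auto
  fix j assume "1 \<le> j" "j \<le> ell a"
  then have "j - 1 < ell a" by simp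
  then have "\<not> a ((j - 1) + 1) \<noteq> 0" unfolding ell_def by (rule not_less_Least)
  then show "a j = 0" using \<open>1 \<le> j\<close> by simp
qed

lemma HH_FF: "even n \<Longrightarrow> HH a n = FF a n (n div 2)"
  by (rule ext) (simp add: HH_def FF_def)

lemma fam_cases:
  assumes "even n" "k \<in> {1..n div 2}"
  shows "(k \<le> ell a div 2 \<and> fam a n k = JJ k) \<or>
         (ell a div 2 < k \<and> fam a n k = FF a n (if k = ell a div 2 + 1 then n div 2 else k - 1))"
  using assms by (auto simp: fam_def Let_def HH_FF)

definition Ev :: "((nat \<Rightarrow> real) \<Rightarrow> real) \<Rightarrow> (nat \<Rightarrow> real) \<Rightarrow> nat \<Rightarrow> real" where
  "Ev f x i = x i * pd f i x"

lemma pbracket_eq: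
  assumes "\<forall>i\<in>{1..n}. x i \<noteq> 0"
  shows "pbracket n f g x = Bf n (Ev f x) (Ev g x)"
  unfolding pbracket_def Bf_def Ev_def
  by (intro sum.cong refl) (simp add: pi_mat_def sg_def)

lemma Ev_JJ: "\<forall>i\<in>{1..n}. x i \<noteq> 0 \<Longrightarrow> i \<in> {1..n} \<Longrightarrow> Ev (JJ k) x i = JJ k x * al k i"
  unfolding Ev_def al_def using EJ[of x i k] by simp

lemma Ev_FF: "\<forall>i\<in>{1..n}. x i \<noteq> 0 \<Longrightarrow> even n \<Longrightarrow> i \<in> {1..n} \<Longrightarrow>
    Ev (FF a n m) x i = MMx n m x * Lv a x (2*m) i + FF a n m x * bt m i"
  unfolding Ev_def Lv_def bt_def using EF[of x i n a m] by (simp add: FF_MM)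

definition famv where
  "famv a n x f = ((\<exists>k. 1 \<le> k \<and> k \<le> ell a div 2 \<and> f = JJ k) \<or>
                   (\<exists>m. ell a div 2 < m \<and> m \<le> n div 2 \<and> f = FF a n m))"

lemma fam_famv:
  assumes "even n" "k \<in> {1..n div 2}" "ell a + 1 \<le> n"
  shows "famv a n x (fam a n k)"
proof -
  let ?l = "ell a div 2"
  have l2: "2 * ?l \<le> ell a" by simp
  have lN: "?l < n div 2" using l2 assms(1,3) by presburger
  show ?thesis
  using fam_cases[OF assms(1,2), of a]
  proof (elim disjE conjE)
    assume "k \<le> ?l" "fam a n k = JJ k"
    then show ?thesis using assms(2) unfolding famv_def by auto
  next
    assume h: "?l < k" "fam a n k = FF a n (if k = ?l + 1 then n div 2 else k - 1)"
    show ?thesis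
    proof (cases "k = ?l + 1")
      case True then show ?thesis using h lN unfolding famv_def by auto
    next
      case False then show ?thesis using h assms(2) unfolding famv_def
        by (intro disjI2 exI[of _ "k - 1"]) auto
    qed
  qed
qed

lemma Bf_famv:
  assumes nz: "\<forall>i\<in>{1..n}. x i \<noteq> 0" and ev: "even n"
    and a0: "\<And>i. 1 \<le> i \<Longrightarrow> i \<le> ell a \<Longrightarrow> a i = 0"
    and f: "famv a n x f" and g: "famv a n x g" and en: "ell a + 1 \<le> n"
  shows "Bf n (Ev f x) (Ev g x) = 0"
proof -
  let ?l = "ell a div 2"
  have a0': "\<And>k i. k \<le> ?l \<Longrightarrow> 1 \<le> i \<Longrightarrow> i \<le> 2*k \<Longrightarrow> a i = 0"
  proof -
    fix k i assume "k \<le> ?l" "1 \<le> i" "i \<le> 2*k"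
    moreover have "2 * ?l \<le> ell a" by simp
    ultimately show "a i = 0" using a0[of i] by linarith
  qed
  have JJ: "Bf n (Ev (JJ k) x) (Ev (JJ k') x) = 0" if "k \<le> ?l" "k' \<le> ?l" "2*?l \<le> n" for k k'
  proof -
    have e: "Bf n (Ev (JJ k) x) (Ev (JJ k') x) = Bf n (\<lambda>i. JJ k x * al k i) (\<lambda>i. JJ k' x * al k' i)"
      by (rule Bf_cong) (simp_all add: Ev_JJ[OF nz])
    show ?thesis
    proof (cases "k \<le> k'")
      case True then show ?thesis unfolding e using that by (intro B_JJ) auto
    next
      case False then show ?thesis unfolding e using that
        by (subst Bf_antisym) (simp add: B_JJ)
    qed
  qed
  have FF: "Bf n (Ev (FF a n m) x) (Ev (FF a n m') x) = 0" if "m \<le> n div 2" "m' \<le> n div 2" for m m'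
  proof -
    have e: "Bf n (Ev (FF a n m) x) (Ev (FF a n m') x) =
      Bf n (\<lambda>i. MMx n m x * Lv a x (2*m) i + FF a n m x * bt m i)
           (\<lambda>i. MMx n m' x * Lv a x (2*m') i + FF a n m' x * bt m' i)"
      by (rule Bf_cong) (simp_all add: Ev_FF[OF nz ev])
    have mm: "2*m \<le> n" "2*m' \<le> n" using that ev by auto
    show ?thesis
    proof (cases "m \<le> m'")
      case True then show ?thesis unfolding e using mm ev by (intro B_FF) auto
    next
      case False then show ?thesis unfolding e using mm ev
        by (subst Bf_antisym) (simp add: B_FF)
    qed
  qed
  have JF: "Bf n (Ev (JJ k) x) (Ev (FF a n m) x) = 0" if "k \<le> ?l" "?l < m" "m \<le> n div 2" for k m
  proof -
    have e: "Bf n (Ev (JJ k) x) (Ev (FF a n m) x) =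
      Bf n (\<lambda>i. JJ k x * al k i)
           (\<lambda>i. MMx n m x * Lv a x (2*m) i + FF a n m x * bt m i)"
      by (rule Bf_cong) (simp_all add: Ev_FF[OF nz ev] Ev_JJ[OF nz])
    show ?thesis unfolding e using that ev a0'[of k] by (intro B_JF) auto
  qed
  have ln: "2*?l \<le> n" using en by linarith
  show ?thesis
    using f g unfolding famv_def
  proof (elim disjE exE conjE)
    fix k k' assume "1 \<le> k" "k \<le> ?l" "f = JJ k" "1 \<le> k'" "k' \<le> ?l" "g = JJ k'"
    then show ?thesis using JJ[of k k'] ln by auto
  next
    fix k m assume "1 \<le> k" "k \<le> ?l" "f = JJ k" "?l < m" "m \<le> n div 2" "g = FF a n m"
    then show ?thesis using JF[of k m] by auto
  next
    fix k m assume "1 \<le> k" "k \<le> ?l" "g = JJ k" "?l < m" "m \<le> n div 2" "f = FF a n m"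
    then show ?thesis using JF[of k m] by (subst Bf_antisym) auto
  next
    fix m m' assume "?l < m" "m \<le> n div 2" "f = FF a n m" "?l < m'" "m' \<le> n div 2" "g = FF a n m'"
    then show ?thesis using FF[of m m'] by auto
  qed
qed




lemma MM_nz: assumes nz: "\<forall>i\<in>{1..n}. x i \<noteq> 0" shows "MMx n m x \<noteq> 0"
proof -
  have "(\<Prod>j\<in>{m+1..n div 2}. x (2*j)) \<noteq> 0" using nz by (auto simp: prod_zero_iff)
  moreover have "(\<Prod>j\<in>{m+1..n div 2}. x (2*j - 1)) \<noteq> 0"
  proof -
    have "\<forall>j\<in>{m+1..n div 2}. x (2*j - 1) \<noteq> 0"
    proof
      fix j assume "j \<in> {m+1..n div 2}"
      then have "2*j - 1 \<in> {1..n}" by auto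
      then show "x (2*j - 1) \<noteq> 0" using nz by blast
    qed
    then show ?thesis by simp
  qed
  ultimately show ?thesis unfolding MMx_def by simp
qed

lemma JJ_nz: assumes nz: "\<forall>i\<in>{1..n}. x i \<noteq> 0" and "2*k \<le> n" shows "JJ k x \<noteq> 0"
proof -
  have "(\<Prod>j\<in>{1..k}. x (2*j)) \<noteq> 0" using nz assms(2) by (auto simp: prod_zero_iff)
  moreover have "(\<Prod>j\<in>{1..k}. x (2*j - 1)) \<noteq> 0"
  proof -
    have "\<forall>j\<in>{1..k}. x (2*j - 1) \<noteq> 0"
    proof
      fix j assume "j \<in> {1..k}"
      then have "2*j - 1 \<in> {1..n}" using assms(2) by auto
      then show "x (2*j - 1) \<noteq> 0" using nz by blast
    qed
    then show ?thesis by simp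
  qed
  ultimately show ?thesis unfolding JJ_def by simp
qed

lemma vv_Suc: "vv a (Suc p) x = vv a p x + a (Suc p) * x (Suc p)"
  by (simp add: vv_def)

lemma F_indep:
  fixes x :: "nat \<Rightarrow> real" and d :: "nat \<Rightarrow> real"
  assumes ev: "even n" and nz: "\<forall>i\<in>{1..n}. x i \<noteq> 0"
    and ae: "a (e+1) \<noteq> 0" and en: "e + 1 \<le> n"
    and vnz: "\<And>j. e < j \<Longrightarrow> j \<le> n \<Longrightarrow> vv a j x \<noteq> 0"
    and ll: "l = e div 2"
    and eq: "\<And>i. i \<in> {1..n} \<Longrightarrow>
       (\<Sum>m\<in>{l+1..n div 2}. d m * (MMx n m x * Lv a x (2*m) i + FF a n m x * bt m i)) = 0"
  shows "\<And>m. m \<in> {l+1..n div 2} \<Longrightarrow> d m = 0"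
proof -
  define N where "N = n div 2"
  have nN: "n = 2*N" using ev N_def by simp
  have el: "e \<le> 2*l+1" "2*l \<le> e" using ll by auto
  define T where "T r = (\<Sum>m\<in>{r..N}. d m * MMx n m x)" for r
  have Tsplit: "T r = d r * MMx n r x + T (r+1)" if "r \<le> N" for r
  proof -
    have "{r..N} = insert r {r+1..N}" using that by auto
    then show ?thesis unfolding T_def by simp
  qed
  have TN: "T (N+1) = 0" unfolding T_def by simp
  have base: "T (l+1) = 0"
  proof -
    define i where "i = e + 1"
    have i: "i \<in> {1..n}" using en i_def by auto
    have "(\<Sum>m\<in>{l+1..N}. d m * (MMx n m x * Lv a x (2*m) i + FF a n m x * bt m i))
        = (\<Sum>m\<in>{l+1..N}. a i * x i * (d m * MMx n m x))"
    proof (intro sum.cong refl)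
      fix m assume "m \<in> {l+1..N}"
      then have "i \<le> 2*m" using el i_def by auto
      then show "d m * (MMx n m x * Lv a x (2*m) i + FF a n m x * bt m i) = a i * x i * (d m * MMx n m x)"
        unfolding Lv_def bt_def by simp
    qed
    also have "\<dots> = a i * x i * T (l+1)" unfolding T_def by (simp add: sum_distrib_left)
    finally have "a i * x i * T (l+1) = 0" using eq[OF i] N_def by simp
    moreover have "a i * x i \<noteq> 0" using ae nz i i_def by simp
    ultimately show ?thesis by simp
  qed
  have step: "T (r+1) = 0" if r: "l+1 \<le> r" "r < N" and dz: "\<And>m. l+1 \<le> m \<Longrightarrow> m < r \<Longrightarrow> d m = 0"
    and Tr: "T r = 0" for r
  proof -
    define i where "i = 2*r+1"
    have i: "i \<in> {1..n}" using r nN i_def by auto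
    have spl: "{l+1..N} = {l+1..r} \<union> {r+1..N}" using r by auto
    have s1: "(\<Sum>m\<in>{l+1..r}. d m * (MMx n m x * Lv a x (2*m) i + FF a n m x * bt m i))
       = - (d r * FF a n r x)"
    proof -
      have "{l+1..r} = insert r {l+1..<r}" using r by auto
      moreover have "(\<Sum>m\<in>{l+1..<r}. d m * (MMx n m x * Lv a x (2*m) i + FF a n m x * bt m i)) = 0"
        using dz by (intro sum.neutral) auto
      moreover have "d r * (MMx n r x * Lv a x (2*r) i + FF a n r x * bt r i) = - (d r * FF a n r x)"
        unfolding Lv_def bt_def i_def by simp
      ultimately show ?thesis by simp
    qed
    have s2: "(\<Sum>m\<in>{r+1..N}. d m * (MMx n m x * Lv a x (2*m) i + FF a n m x * bt m i))
       = a i * x i * T (r+1)"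
    proof -
      have "(\<Sum>m\<in>{r+1..N}. d m * (MMx n m x * Lv a x (2*m) i + FF a n m x * bt m i))
        = (\<Sum>m\<in>{r+1..N}. a i * x i * (d m * MMx n m x))"
      proof (intro sum.cong refl)
        fix m assume "m \<in> {r+1..N}"
        then have "i \<le> 2*m" using i_def by auto
        then show "d m * (MMx n m x * Lv a x (2*m) i + FF a n m x * bt m i) = a i * x i * (d m * MMx n m x)"
          unfolding Lv_def bt_def by simp
      qed
      then show ?thesis unfolding T_def by (simp add: sum_distrib_left)
    qed
    have "0 = (\<Sum>m\<in>{l+1..N}. d m * (MMx n m x * Lv a x (2*m) i + FF a n m x * bt m i))"
      using eq[OF i] N_def by simp
    also have "\<dots> = - (d r * FF a n r x) + a i * x i * T (r+1)"
      unfolding spl using r s1 s2 by (simp add: sum.union_disjoint)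
    also have "d r * FF a n r x = vv a (2*r) x * (d r * MMx n r x)" by (simp add: FF_MM)
    also have "d r * MMx n r x = - T (r+1)" using Tsplit[of r] Tr r by simp
    finally have "(vv a (2*r) x + a i * x i) * T (r+1) = 0" by (simp add: algebra_simps)
    moreover have "vv a (2*r) x + a i * x i = vv a i x" unfolding i_def using vv_Suc[of a "2*r" x] by simp
    moreover have "vv a i x \<noteq> 0" using vnz[of i] i el r i_def by simp
    ultimately show ?thesis by simp
  qed
  have main: "l+1+j \<le> N+1 \<Longrightarrow> T (l+1+j) = 0 \<and> (\<forall>m. l+1 \<le> m \<longrightarrow> m < l+1+j \<longrightarrow> d m = 0)" for j
  proof (induction j)
    case 0 then show ?case using base by simp
  next
    case (Suc j)
    define r where "r = l+1+j"
    have rN: "r \<le> N" using Suc.prems r_def by simp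
    have IH: "T r = 0" "\<And>m. l+1 \<le> m \<Longrightarrow> m < r \<Longrightarrow> d m = 0" using Suc.IH Suc.prems r_def by auto
    have T1: "T (r+1) = 0"
    proof (cases "r = N")
      case True then show ?thesis using TN by simp
    next
      case False then show ?thesis using step[of r] IH rN r_def by simp
    qed
    have "d r * MMx n r x = 0" using Tsplit[OF rN] IH T1 by simp
    then have "d r = 0" using MM_nz[OF nz] by simp
    then show ?case using T1 IH r_def by (auto simp: less_Suc_eq)
  qed
  fix m assume m: "m \<in> {l+1..n div 2}"
  have "l \<le> N" using el en nN by linarith
  then have "l+1+(N-l) \<le> N+1" "l+1+(N-l) = N+1" by auto
  then show "d m = 0" using main[of "N-l"] m N_def by auto
qed




lemma indep:
  fixes x :: "nat \<Rightarrow> real" and c :: "nat \<Rightarrow> real"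
  assumes ev: "even n" and ex: "\<exists>i\<in>{1..n}. a i \<noteq> 0" and nz: "\<forall>i\<in>{1..n}. x i \<noteq> 0"
    and vnz: "\<And>j. ell a < j \<Longrightarrow> j \<le> n \<Longrightarrow> vv a j x \<noteq> 0"
    and cz: "\<forall>i\<in>{1..n}. (\<Sum>k\<in>{1..n div 2}. c k * pd (fam a n k) i x) = 0"
  shows "\<forall>k\<in>{1..n div 2}. c k = 0"
proof -
  define e where "e = ell a"
  define l where "l = e div 2"
  define N where "N = n div 2"
  have nN: "n = 2*N" using ev N_def by simp
  have ae: "a (e+1) \<noteq> 0" and en: "e + 1 \<le> n" and a0: "\<And>i. 1 \<le> i \<Longrightarrow> i \<le> e \<Longrightarrow> a i = 0"
    using ell_facts[OF ex] e_def by auto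
  have el: "e \<le> 2*l+1" "2*l \<le> e" using l_def by auto
  have lN: "l < N" using el en nN by linarith
  define EFv where "EFv m i = MMx n m x * Lv a x (2*m) i + FF a n m x * bt m i" for m i
  define \<sigma> where "\<sigma> k = (if k = l+1 then N else k - 1)" for k
  define \<tau> where "\<tau> m = (if m = N then l+1 else m + 1)" for m
  have famF: "fam a n k = FF a n (\<sigma> k)" if "k \<in> {l+1..N}" for k
    using that unfolding fam_def Let_def \<sigma>_def l_def e_def N_def by (auto simp: HH_FF[OF ev])
  have famJ: "fam a n k = JJ k" if "k \<in> {1..l}" for k
    using that unfolding fam_def Let_def l_def e_def by auto
  have eq0: "(\<Sum>k\<in>{1..N}. c k * Ev (fam a n k) x i) = 0" if i: "i \<in> {1..n}" for i
  proof -
    have "(\<Sum>k\<in>{1..N}. c k * Ev (fam a n k) x i) = x i * (\<Sum>k\<in>{1..N}. c k * pd (fam a n k) i x)"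
      unfolding Ev_def by (simp add: sum_distrib_left mult_ac)
    then show ?thesis using cz i N_def by simp
  qed
  have eq1: "(\<Sum>k\<in>{1..l}. c k * (JJ k x * al k i)) + (\<Sum>k\<in>{l+1..N}. c k * EFv (\<sigma> k) i) = 0"
    if i: "i \<in> {1..n}" for i
  proof -
    have "(\<Sum>k\<in>{1..N}. c k * Ev (fam a n k) x i) =
      (\<Sum>k\<in>{1..l}. c k * Ev (fam a n k) x i) + (\<Sum>k\<in>{l+1..N}. c k * Ev (fam a n k) x i)"
      using lN by (intro sum_split) simp
    also have "(\<Sum>k\<in>{1..l}. c k * Ev (fam a n k) x i) = (\<Sum>k\<in>{1..l}. c k * (JJ k x * al k i))"
      by (intro sum.cong refl) (simp add: famJ Ev_JJ[OF nz i])
    also have "(\<Sum>k\<in>{l+1..N}. c k * Ev (fam a n k) x i) = (\<Sum>k\<in>{l+1..N}. c k * EFv (\<sigma> k) i)"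
      by (intro sum.cong refl) (simp add: famF Ev_FF[OF nz ev i] EFv_def)
    finally show ?thesis using eq0[OF i] by simp
  qed
  have Fzero2r: "(\<Sum>k\<in>{l+1..N}. c k * EFv (\<sigma> k) (2*r)) = 0" if "1 \<le> r" "r \<le> l" for r
  proof (intro sum.neutral ballI)
    fix k assume k: "k \<in> {l+1..N}"
    have "l + 1 \<le> \<sigma> k" using k lN unfolding \<sigma>_def by auto
    then have "2*r \<le> 2 * \<sigma> k" using that by simp
    moreover have "a (2*r) = 0" using a0[of "2*r"] that el by simp
    ultimately show "c k * EFv (\<sigma> k) (2*r) = 0" unfolding EFv_def Lv_def bt_def by simp
  qed
  define R where "R r = (\<Sum>k\<in>{r..l}. c k * JJ k x)" for r
  have R0: "R r = 0" if r: "1 \<le> r" "r \<le> l" for r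
  proof -
    have i: "2*r \<in> {1..n}" using r lN nN by auto
    have "(\<Sum>k\<in>{1..l}. c k * (JJ k x * al k (2*r))) = 0" using eq1[OF i] Fzero2r[OF r] by simp
    moreover have "(\<Sum>k\<in>{1..l}. c k * (JJ k x * al k (2*r))) = (\<Sum>k\<in>{1..l}. if r \<le> k then - (c k * JJ k x) else 0)"
      by (intro sum.cong refl) (auto simp: al_def)
    moreover have "(\<Sum>k\<in>{1..l}. if r \<le> k then - (c k * JJ k x) else 0) = - R r"
    proof -
      have "(\<Sum>k\<in>{1..l}. if r \<le> k then - (c k * JJ k x) else 0) = (\<Sum>k\<in>{1..l} \<inter> {k. r \<le> k}. - (c k * JJ k x))"
        by (simp add: sum.inter_restrict)
      also have "{1..l} \<inter> {k. r \<le> k} = {r..l}" using r by auto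
      finally show ?thesis unfolding R_def by (simp add: sum_negf)
    qed
    ultimately show ?thesis by simp
  qed
  have cJ: "c r = 0" if r: "r \<in> {1..l}" for r
  proof -
    have "{r..l} = insert r {r+1..l}" using r by auto
    then have "R r = c r * JJ r x + R (r+1)" unfolding R_def by simp
    moreover have "R (r+1) = 0"
    proof (cases "r + 1 \<le> l")
      case True then show ?thesis using R0 by simp
    next
      case False then show ?thesis unfolding R_def by simp
    qed
    moreover have "JJ r x \<noteq> 0" using JJ_nz[OF nz, of r] r lN nN by simp
    ultimately show ?thesis using R0[of r] r by simp
  qed
  define d where "d m = c (\<tau> m)" for m
  have reidx: "(\<Sum>k\<in>{l+1..N}. c k * EFv (\<sigma> k) i) = (\<Sum>m\<in>{l+1..N}. d m * EFv m i)" for i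
  proof (rule sum.reindex_bij_witness[where i = \<tau> and j = \<sigma>])
    fix k assume k: "k \<in> {l+1..N}"
    show "\<tau> (\<sigma> k) = k" using k unfolding \<sigma>_def \<tau>_def by auto
    show "\<sigma> k \<in> {l+1..N}" using k lN unfolding \<sigma>_def by auto
    show "d (\<sigma> k) * EFv (\<sigma> k) i = c k * EFv (\<sigma> k) i"
      unfolding d_def using k unfolding \<sigma>_def \<tau>_def by auto
  next
    fix m assume m: "m \<in> {l+1..N}"
    show "\<sigma> (\<tau> m) = m" using m unfolding \<sigma>_def \<tau>_def by auto
    show "\<tau> m \<in> {l+1..N}" using m lN unfolding \<tau>_def by auto
  qed
  have eqF: "(\<Sum>m\<in>{l+1..n div 2}. d m * (MMx n m x * Lv a x (2*m) i + FF a n m x * bt m i)) = 0"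
    if i: "i \<in> {1..n}" for i
  proof -
    have "(\<Sum>k\<in>{1..l}. c k * (JJ k x * al k i)) = 0" using cJ by (intro sum.neutral) auto
    then show ?thesis using eq1[OF i] reidx[of i] unfolding EFv_def N_def by simp
  qed
  have dz: "\<And>m. m \<in> {l+1..n div 2} \<Longrightarrow> d m = 0"
    by (rule F_indep[OF ev nz ae en _ _ eqF]) (use vnz e_def l_def in auto)
  show ?thesis
  proof
    fix k assume k: "k \<in> {1..n div 2}"
    show "c k = 0"
    proof (cases "k \<le> l")
      case True then show ?thesis using cJ k by auto
    next
      case False
      then have k': "k \<in> {l+1..N}" using k N_def by auto
      then have "\<sigma> k \<in> {l+1..n div 2}" using lN unfolding \<sigma>_def N_def by auto
      then have "d (\<sigma> k) = 0" by (rule dz)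
      moreover have "\<tau> (\<sigma> k) = k" using k' unfolding \<sigma>_def \<tau>_def by auto
      ultimately show ?thesis unfolding d_def by simp
    qed
  qed
qed




lemma cont_vv: "continuous_on UNIV (\<lambda>x. vv a j x)"
  unfolding vv_def
  by (intro continuous_intros continuous_on_product_coordinates)

lemma U_open:
  "openin (top_of_set (Rn n)) {x \<in> Rn n. (\<forall>i\<in>{1..n}. x i \<noteq> 0) \<and> (\<forall>j. e < j \<and> j \<le> n \<longrightarrow> vv a j x \<noteq> 0)}"
proof -
  define T where "T = (\<Inter>i\<in>{1..n}. {x::nat\<Rightarrow>real. x i \<noteq> 0}) \<inter> (\<Inter>j\<in>{e<..n}. {x. vv a j x \<noteq> 0})"
  have "open T" unfolding T_def
  proof (intro open_Int open_INT finite_atLeastAtMost finite_greaterThanAtMost ballI)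
    fix i show "open {x::nat\<Rightarrow>real. x i \<noteq> 0}"
      by (rule open_Collect_neq) (auto intro: continuous_on_product_coordinates)
  next
    fix j show "open {x::nat\<Rightarrow>real. vv a j x \<noteq> 0}"
      by (rule open_Collect_neq) (auto intro: cont_vv)
  qed
  moreover have "{x \<in> Rn n. (\<forall>i\<in>{1..n}. x i \<noteq> 0) \<and> (\<forall>j. e < j \<and> j \<le> n \<longrightarrow> vv a j x \<noteq> 0)} = Rn n \<inter> T"
    unfolding T_def by auto
  ultimately show ?thesis unfolding openin_open by blast
qed

lemma U_dense:
  assumes ae: "a (e+1) \<noteq> 0"
  shows "Rn n \<subseteq> closure {x \<in> Rn n. (\<forall>i\<in>{1..n}. x i \<noteq> 0) \<and> (\<forall>j. e < j \<and> j \<le> n \<longrightarrow> vv a j x \<noteq> 0)}"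
    (is "_ \<subseteq> closure ?U")
proof
  fix y assume y: "y \<in> Rn n"
  define dd where "dd i = (if i \<in> {1..n} then (if a i \<noteq> 0 then a i else 1) else (0::real))" for i
  define sa where "sa j = (\<Sum>i\<in>{1..j}. a i * dd i)" for j
  define \<gamma> where "\<gamma> t = (\<lambda>i. y i + t * dd i)" for t :: real
  have ddnz: "dd i \<noteq> 0" if "i \<in> {1..n}" for i using that unfolding dd_def by auto
  have sapos: "sa j \<noteq> 0" if "e < j" "j \<le> n" for j
  proof -
    have "0 < sa j" unfolding sa_def
    proof (rule sum_pos2[where i = "e+1"])
      show "e + 1 \<in> {1..j}" using that by auto
      show "0 < a (e+1) * dd (e+1)" using ae that unfolding dd_def by (auto simp: zero_less_mult_iff)
      fix i assume "i \<in> {1..j}"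
      then show "0 \<le> a i * dd i" unfolding dd_def using that by auto
    qed simp
    then show ?thesis by simp
  qed
  have vvg: "vv a j (\<gamma> t) = vv a j y + t * sa j" for j t
    unfolding vv_def \<gamma>_def sa_def by (simp add: algebra_simps sum.distrib sum_distrib_left)
  have cg: "continuous_on UNIV \<gamma>"
    unfolding \<gamma>_def by (intro continuous_on_coordinatewise_then_product continuous_intros)
  have "\<forall>S. open S \<longrightarrow> y \<in> S \<longrightarrow> ?U \<inter> S \<noteq> {}"
  proof (intro allI impI)
    fix S :: "(nat \<Rightarrow> real) set" assume S: "open S" "y \<in> S"
    have "open (\<gamma> -` S \<inter> UNIV)" using cg S(1) continuous_on_open_vimage[of UNIV \<gamma>] by simp
    moreover have "0 \<in> \<gamma> -` S" using S(2) unfolding \<gamma>_def by simp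
    ultimately obtain \<epsilon> where \<epsilon>: "\<epsilon> > 0" "ball 0 \<epsilon> \<subseteq> \<gamma> -` S" by (auto elim!: openE)
    define B where "B = (\<lambda>i. - y i / dd i) ` {1..n} \<union> (\<lambda>j. - vv a j y / sa j) ` {e<..n}"
    have "finite B" unfolding B_def by simp
    then obtain \<delta> where \<delta>: "\<delta> > 0" "\<forall>b\<in>B. b \<noteq> 0 \<longrightarrow> \<delta> \<le> dist 0 b"
      using finite_set_avoid[of B "0::real"] by blast
    define t where "t = min \<epsilon> \<delta> / 2"
    have t: "0 < t" "t < \<epsilon>" "t < \<delta>" unfolding t_def using \<epsilon> \<delta> by auto
    have tB: "t \<notin> B"
    proof
      assume "t \<in> B"
      then have "\<delta> \<le> dist 0 t" using \<delta> t by auto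
      then show False using t by (simp add: dist_real_def)
    qed
    have "t \<in> ball 0 \<epsilon>" using t by (simp add: dist_real_def)
    then have "\<gamma> t \<in> S" using \<epsilon>(2) by blast
    moreover have "\<gamma> t \<in> ?U"
    proof -
      have "\<gamma> t \<in> Rn n" using y unfolding Rn_def \<gamma>_def dd_def by auto
      moreover have "\<gamma> t i \<noteq> 0" if i: "i \<in> {1..n}" for i
      proof
        assume "\<gamma> t i = 0"
        then have "t = - y i / dd i" using ddnz[OF i] unfolding \<gamma>_def by (simp add: field_simps)
        then show False using tB i unfolding B_def by auto
      qed
      moreover have "vv a j (\<gamma> t) \<noteq> 0" if j: "e < j" "j \<le> n" for j
      proof
        assume "vv a j (\<gamma> t) = 0"
        then have "t = - vv a j y / sa j" using sapos[OF j] unfolding vvg by (simp add: field_simps)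
        then show False using tB j unfolding B_def by auto
      qed
      ultimately show ?thesis by blast
    qed
    ultimately show "?U \<inter> S \<noteq> {}" by blast
  qed
  then show "y \<in> closure ?U" unfolding closure_iff_nhds_not_empty by blast
qed


theorem theorem2p3:
  fixes n :: nat and a :: "nat \<Rightarrow> real"
  assumes "n \<ge> 1" and "even n"
    and "\<exists>i\<in>{1..n}. a i \<noteq> 0"
  shows "(\<forall>x\<in>Rn n. (\<forall>i\<in>{1..n}. x i \<noteq> 0) \<longrightarrow>
            (\<forall>p\<in>{1..n div 2}. \<forall>q\<in>{1..n div 2}. pbracket n (fam a n p) (fam a n q) x = 0))
       \<and> (\<exists>U. openin (top_of_set (Rn n)) U \<and> Rn n \<subseteq> closure U
            \<and> U \<subseteq> {x. \<forall>i\<in>{1..n}. x i \<noteq> 0}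
            \<and> (\<forall>x\<in>U. \<forall>c :: nat \<Rightarrow> real.
                  (\<forall>i\<in>{1..n}. (\<Sum>k\<in>{1..n div 2}. c k * pd (fam a n k) i x) = 0)
                  \<longrightarrow> (\<forall>k\<in>{1..n div 2}. c k = 0)))"
proof -
  have ae: "a (ell a + 1) \<noteq> 0" and en: "ell a + 1 \<le> n"
    and a0: "\<And>i. 1 \<le> i \<Longrightarrow> i \<le> ell a \<Longrightarrow> a i = 0"
    using ell_facts[OF assms(3)] by auto
  have P1: "\<forall>x\<in>Rn n. (\<forall>i\<in>{1..n}. x i \<noteq> 0) \<longrightarrow>
            (\<forall>p\<in>{1..n div 2}. \<forall>q\<in>{1..n div 2}. pbracket n (fam a n p) (fam a n q) x = 0)"
  proof (intro ballI impI)
    fix x :: "nat \<Rightarrow> real" and p q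
    assume nz: "\<forall>i\<in>{1..n}. x i \<noteq> 0" and p: "p \<in> {1..n div 2}" and q: "q \<in> {1..n div 2}"
    show "pbracket n (fam a n p) (fam a n q) x = 0"
      unfolding pbracket_eq[OF nz]
      by (rule Bf_famv[OF nz assms(2) a0 fam_famv[OF assms(2) p en] fam_famv[OF assms(2) q en] en])
  qed
  define U where "U = {x \<in> Rn n. (\<forall>i\<in>{1..n}. x i \<noteq> 0) \<and> (\<forall>j. ell a < j \<and> j \<le> n \<longrightarrow> vv a j x \<noteq> 0)}"
  have "openin (top_of_set (Rn n)) U" unfolding U_def by (rule U_open)
  moreover have "Rn n \<subseteq> closure U" unfolding U_def using ae by (rule U_dense)
  moreover have "U \<subseteq> {x. \<forall>i\<in>{1..n}. x i \<noteq> 0}" unfolding U_def by auto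
  moreover have "\<forall>x\<in>U. \<forall>c :: nat \<Rightarrow> real.
                  (\<forall>i\<in>{1..n}. (\<Sum>k\<in>{1..n div 2}. c k * pd (fam a n k) i x) = 0)
                  \<longrightarrow> (\<forall>k\<in>{1..n div 2}. c k = 0)"
  proof (rule ballI, rule allI, rule impI)
    fix x c assume x: "x \<in> U" and cz: "\<forall>i\<in>{1..n}. (\<Sum>k\<in>{1..n div 2}. c k * pd (fam a n k) i x) = 0"
    show "\<forall>k\<in>{1..n div 2}. c k = 0"
    proof (rule indep[OF assms(2) assms(3)])
      show "\<forall>i\<in>{1..n}. x i \<noteq> 0" using x unfolding U_def by auto
      show "\<And>j. ell a < j \<Longrightarrow> j \<le> n \<Longrightarrow> vv a j x \<noteq> 0" using x unfolding U_def by auto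
      show "\<forall>i\<in>{1..n}. (\<Sum>k\<in>{1..n div 2}. c k * pd (fam a n k) i x) = 0" by (rule cz)
    qed
  qed
  ultimately show ?thesis using P1 by blast
qed

end
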